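(* For every integer $d\ge 1$ there exist infinite families $\mathcal A$ and $\mathcal B$ of closed convex sets in $\mathbb R^d$ such that $\pi(\mathcal A)=\infty$, every member of $\mathcal B$ is bounded, and the family $\mathcal F=\mathcal A\cup\mathcal B$ satisfies the $(d+2k,d+k)$-property for every integer $k\ge 0$.
   Context: A family of at least $p$ sets satisfies the $(p,q)$-property if among any $p$ of its members there are $q$ with a common point. The piercing number $\pi(\mathcal A)$ is the minimum cardinality of a set of points meeting every member of $\mathcal A$, and $\pi(\mathcal A)=\infty$ if no finite such set exists. *)

theory Defs
  imports "HOL-Analysis.Analysis"
begin

definition pq_property :: "nat \<Rightarrow> nat \<Rightarrow> 'a set set \<Rightarrow> bool" where
  "pq_property p q F \<longleftrightarrow>
     (infinite F \<or> p \<le> card F) \<and>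
     (\<forall>S \<subseteq> F. finite S \<and> card S = p \<longrightarrow>
        (\<exists>T \<subseteq> S. card T = q \<and> \<Inter>T \<noteq> {}))"

text \<open>Piercing number: minimum cardinality of a finite point set meeting every member;
infinity if no finite such set exists (Inf of the empty set of enat is infinity).\<close>
definition piercing_number :: "'a set set \<Rightarrow> enat" where
  "piercing_number F =
     (INF P \<in> {P. finite P \<and> (\<forall>A\<in>F. A \<inter> P \<noteq> {})}. enat (card P))"

end

theory Submission
  imports Defs "HOL-Computational_Algebra.Fundamental_Theorem_Algebra"
begin


lemma comb_pq:
  fixes A B :: "'a set set" and d k :: nat
  assumes inf: "infinite A"
    and hA: "\<And>A'. A' \<subseteq> A \<Longrightarrow> finite A' \<Longrightarrow> \<Inter>A' \<noteq> {}"
    and hAB: "\<And>A' B'. A' \<subseteq> A \<Longrightarrow> finite A' \<Longrightarrow> card A' \<le> d - 1 \<Longrightarrow> B' \<subseteq> B \<Longrightarrow> finite B' \<Longrightarrow> \<Inter>(A' \<union> B') \<noteq> {}"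
    and d: "d \<ge> 1"
  shows "pq_property (d + 2*k) (d + k) (A \<union> B)"
  unfolding pq_property_def
proof (intro conjI allI impI)
  show "infinite (A \<union> B) \<or> d + 2 * k \<le> card (A \<union> B)" using inf by auto
next
  fix S assume S0: "S \<subseteq> A \<union> B" and S1: "finite S \<and> card S = d + 2 * k"
  have S: "S \<subseteq> A \<union> B \<and> finite S \<and> card S = d + 2 * k" using S0 S1 by blast
  define Sa where "Sa = S \<inter> A"
  define Sb where "Sb = S - A"
  have fa: "finite Sa" "finite Sb" using S by (auto simp: Sa_def Sb_def)
  have cs: "card Sa + card Sb = d + 2*k"
  proof -
    have "Sa \<union> Sb = S" "Sa \<inter> Sb = {}" by (auto simp: Sa_def Sb_def)
    then show ?thesis using S card_Un_disjoint[OF fa] by simp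
  qed
  show "\<exists>T\<subseteq>S. card T = d + k \<and> \<Inter> T \<noteq> {}"
  proof (cases "d + k \<le> card Sa")
    case True
    then obtain T where T: "T \<subseteq> Sa" "card T = d + k" "finite T" by (rule obtain_subset_with_card_n)
    then have "\<Inter>T \<noteq> {}" using hA[of T] by (auto simp: Sa_def)
    then show ?thesis using T by (auto simp: Sa_def)
  next
    case False
    obtain Ta where Ta: "Ta \<subseteq> Sa" "card Ta = min (card Sa) (d-1)" "finite Ta"
      by (rule obtain_subset_with_card_n[of "min (card Sa) (d-1)" Sa]) auto
    have disj: "Ta \<inter> Sb = {}" using Ta(1) by (auto simp: Sa_def Sb_def)
    have cT: "card (Ta \<union> Sb) \<ge> d + k"
      using card_Un_disjoint[OF Ta(3) fa(2) disj] Ta(2) cs False d by linarith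
    have ne: "\<Inter>(Ta \<union> Sb) \<noteq> {}"
      using hAB[of Ta Sb] Ta fa S by (auto simp: Sa_def Sb_def)
    obtain T where T: "T \<subseteq> Ta \<union> Sb" "card T = d + k" "finite T"
      using obtain_subset_with_card_n[OF cT] by blast
    have "\<Inter>(Ta \<union> Sb) \<subseteq> \<Inter>T" using T(1) by auto
    then have "\<Inter>T \<noteq> {}" using ne by auto
    moreover have "T \<subseteq> S" using T(1) Ta(1) by (auto simp: Sa_def Sb_def)
    ultimately show ?thesis using T by auto
  qed
qed


definition Qv :: "nat \<Rightarrow> (nat \<Rightarrow> 'n) \<Rightarrow> real^'n \<Rightarrow> real \<Rightarrow> real" where
  "Qv d h x t = (\<Sum>j<d. (if j = 0 then 1 else x $ h j) * t^j)"

definition Aset :: "nat \<Rightarrow> (nat \<Rightarrow> 'n) \<Rightarrow> nat \<Rightarrow> (real^'n) set" where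
  "Aset d h m = {x. real (Suc m) * \<bar>Qv d h x (real (Suc m))\<bar> \<le> x $ h 0}"

lemma Qv_comb: "u + v = 1 \<Longrightarrow> Qv d h (u *\<^sub>R x + v *\<^sub>R y) t = u * Qv d h x t + v * Qv d h y t"
  unfolding Qv_def sum_distrib_left sum.distrib[symmetric]
  by (rule sum.cong) (auto simp: algebra_simps)

lemma Aset_convex: "convex (Aset d (h::nat\<Rightarrow>'n::finite) m)"
  unfolding convex_def
proof (intro ballI allI impI)
  fix x y :: "real^'n" and u v :: real
  assume x: "x \<in> Aset d h m" and y: "y \<in> Aset d h m" and uv: "0 \<le> u" "0 \<le> v" "u + v = 1"
  define c where "c = real (Suc m)"
  have c: "c \<ge> 0" by (simp add: c_def)
  have "c * \<bar>Qv d h (u *\<^sub>R x + v *\<^sub>R y) c\<bar> = c * \<bar>u * Qv d h x c + v * Qv d h y c\<bar>"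
    by (subst Qv_comb[OF uv(3)]) (rule refl)
  also have "\<dots> \<le> c * (u * \<bar>Qv d h x c\<bar> + v * \<bar>Qv d h y c\<bar>)"
    using c uv by (intro mult_left_mono) (auto simp: abs_mult intro!: order.trans[OF abs_triangle_ineq])
  also have "\<dots> = u * (c * \<bar>Qv d h x c\<bar>) + v * (c * \<bar>Qv d h y c\<bar>)" by (simp add: algebra_simps)
  also have "\<dots> \<le> u * x $ h 0 + v * y $ h 0"
    using x y uv by (intro add_mono mult_left_mono) (auto simp: Aset_def c_def)
  finally show "u *\<^sub>R x + v *\<^sub>R y \<in> Aset d h m" by (simp add: Aset_def c_def)
qed

lemma cont_coef: "continuous_on UNIV (\<lambda>x::real^'n. if j = 0 then 1 else x $ h j)"
  by (cases "j = 0") (auto intro: continuous_intros)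

lemma Aset_closed: "closed (Aset d (h::nat\<Rightarrow>'n::finite) m)"
  unfolding Aset_def Qv_def
  by (intro closed_Collect_le continuous_intros cont_coef)

definition zv :: "(nat \<Rightarrow> 'n::finite) \<Rightarrow> real \<Rightarrow> real^'n" where
  "zv h c = (\<chi> i. if i = h 0 then c else 0)"

lemma Qv_zv:
  assumes hb: "bij_betw h {0..<d} (UNIV::'n::finite set)" and d: "d \<ge> 1"
  shows "Qv d h (zv h c) t = 1"
proof -
  have "Qv d h (zv h c) t = (\<Sum>j<d. if j = 0 then 1 else 0)"
    unfolding Qv_def
  proof (rule sum.cong)
    fix j assume j: "j \<in> {..<d}"
    show "(if j = 0 then 1 else zv h c $ h j) * t ^ j = (if j = 0 then 1 else 0)"
    proof (cases "j = 0")
      case False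
      have "h j \<noteq> h 0"
      proof
        assume "h j = h 0"
        then have "j = 0" using hb j d unfolding bij_betw_def inj_on_def by (meson atLeastLessThan_iff lessThan_iff less_le_trans zero_le zero_less_one)
        then show False using False by simp
      qed
      then show ?thesis using False by (simp add: zv_def)
    qed simp
  qed simp
  also have "\<dots> = 1" using d by simp
  finally show ?thesis .
qed

lemma zv_mem:
  assumes hb: "bij_betw h {0..<d} (UNIV::'n::finite set)" and d: "d \<ge> 1"
  shows "zv h c \<in> Aset d h m \<longleftrightarrow> real (Suc m) \<le> c"
  using Qv_zv[OF hb d] by (simp add: Aset_def zv_def)

lemma Aset_escape:
  assumes hb: "bij_betw h {0..<d} (UNIV::'n::finite set)" and d: "d \<ge> 1"
  shows "\<exists>N. \<forall>m\<ge>N. (x::real^'n) \<notin> Aset d h m"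
proof -
  define p :: "real poly" where "p = (\<Sum>j<d. monom (if j = 0 then 1 else x $ h j) j)"
  have pq: "poly p t = Qv d h x t" for t
    unfolding p_def Qv_def by (simp add: poly_sum poly_monom)
  have "coeff p 0 = 1" using d unfolding p_def by (simp add: coeff_sum coeff_monom)
  then have "p \<noteq> 0" by auto
  from poly_infinity[OF this, of "x $ h 0 + 1" 0] obtain r where
    r: "\<And>z. r \<le> norm z \<Longrightarrow> x $ h 0 + 1 \<le> norm (poly (pCons 0 p) z)" by blast
  show ?thesis
  proof (intro exI allI impI)
    fix m assume m: "nat \<lceil>r\<rceil> \<le> m"
    have "r \<le> real (Suc m)" using m by linarith
    then have "r \<le> norm (real (Suc m))" by simp
    from r[OF this] have "x $ h 0 + 1 \<le> real (Suc m) * \<bar>Qv d h x (real (Suc m))\<bar>"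
      by (simp add: pq abs_mult)
    then show "x \<notin> Aset d h m" by (simp add: Aset_def)
  qed
qed

definition qM :: "nat set \<Rightarrow> real poly" where
  "qM M = (\<Prod>m\<in>M. [:1, - 1 / real (Suc m):])"

lemma qM_props:
  assumes "finite M"
  shows "coeff (qM M) 0 = 1 \<and> degree (qM M) \<le> card M \<and> (\<forall>j. \<bar>coeff (qM M) j\<bar> \<le> 2 ^ card M)"
  using assms
proof (induction M rule: finite_induct)
  case empty
  then show ?case by (simp add: qM_def coeff_1)
next
  case (insert m M)
  define c :: real where "c = - 1 / real (Suc m)"
  have c: "\<bar>c\<bar> \<le> 1" by (simp add: c_def)
  have q: "qM (insert m M) = qM M + pCons 0 (smult c (qM M))"
    using insert by (simp add: qM_def c_def)
  have "coeff (qM (insert m M)) 0 = 1" using insert q by simp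
  moreover have "degree (qM (insert m M)) \<le> card (insert m M)"
  proof -
    have "degree (qM (insert m M)) \<le> max (degree (qM M)) (degree (pCons 0 (smult c (qM M))))"
      unfolding q by (rule degree_add_le_max)
    also have "\<dots> \<le> Suc (degree (qM M))"
      by (auto simp: degree_pCons_le intro: order.trans[OF degree_pCons_le])
    finally show ?thesis using insert by simp
  qed
  moreover have "\<bar>coeff (qM (insert m M)) j\<bar> \<le> 2 ^ card (insert m M)" for j
  proof -
    have b: "\<bar>coeff (pCons 0 (smult c (qM M))) j\<bar> \<le> 2 ^ card M"
    proof (cases j)
      case (Suc k)
      have "\<bar>c * coeff (qM M) k\<bar> \<le> 1 * 2 ^ card M"
        unfolding abs_mult using c insert.IH by (intro mult_mono) auto
      then show ?thesis using Suc by simp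
    qed simp
    have "\<bar>coeff (qM (insert m M)) j\<bar> \<le> \<bar>coeff (qM M) j\<bar> + \<bar>coeff (pCons 0 (smult c (qM M))) j\<bar>"
      unfolding q coeff_add by (rule abs_triangle_ineq)
    also have "\<dots> \<le> 2 ^ card M + 2 ^ card M" using b insert.IH by (intro add_mono) auto
    finally show ?thesis using insert by simp
  qed
  ultimately show ?case by blast
qed

lemma qM_root: "finite M \<Longrightarrow> m \<in> M \<Longrightarrow> poly (qM M) (real (Suc m)) = 0"
  unfolding qM_def poly_prod
  by (rule prod_zero) (auto intro!: bexI[of _ m])

lemma poly_point:
  assumes hb: "bij_betw h {0..<d} (UNIV::'n::finite set)" and d: "d \<ge> 1"
    and M: "finite M" "card M \<le> d - 1"
  shows "\<exists>p::real^'n. norm p \<le> real d * 2 ^ d \<and> (\<forall>m\<in>M. p \<in> Aset d h m)"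
proof -
  define q where "q = qM M"
  note qp = qM_props[OF M(1), folded q_def]
  define p :: "real^'n" where "p = (\<chi> i. if i = h 0 then 0 else coeff q (inv_into {0..<d} h i))"
  have inj: "inj_on h {0..<d}" using hb by (simp add: bij_betw_def)
  have pj: "p $ h j = (if j = 0 then 0 else coeff q j)" if j: "j < d" for j
  proof -
    have "h j = h 0 \<longleftrightarrow> j = 0" using inj j d unfolding inj_on_def by force
    moreover have "inv_into {0..<d} h (h j) = j" using inj j by (simp add: inv_into_f_f)
    ultimately show ?thesis by (simp add: p_def)
  qed
  have Qp: "Qv d h p t = poly q t" for t
  proof -
    have "Qv d h p t = (\<Sum>j<d. coeff q j * t ^ j)"
      unfolding Qv_def by (rule sum.cong) (auto simp: pj qp)
    also have "\<dots> = (\<Sum>j\<le>degree q. coeff q j * t ^ j)"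
    proof (rule sum.mono_neutral_right)
      show "{..degree q} \<subseteq> {..<d}" using qp M d by auto
    qed (auto simp: coeff_eq_0)
    also have "\<dots> = poly q t" by (simp add: poly_altdef)
    finally show ?thesis .
  qed
  have cardn: "CARD('n) = d" using bij_betw_same_card[OF hb] by simp
  have "norm p \<le> (\<Sum>i\<in>UNIV. \<bar>p $ i\<bar>)" by (rule norm_le_l1_cart)
  also have "\<dots> \<le> (\<Sum>i\<in>(UNIV::'n set). 2 ^ d)"
  proof (rule sum_mono)
    fix i :: 'n
    have "\<bar>p $ i\<bar> \<le> 2 ^ card M" using qp by (simp add: p_def)
    also have "(2::real) ^ card M \<le> 2 ^ d" using M by (intro power_increasing) auto
    finally show "\<bar>p $ i\<bar> \<le> 2 ^ d" .
  qed
  also have "\<dots> = real d * 2 ^ d" using cardn by simp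
  finally have "norm p \<le> real d * 2 ^ d" .
  moreover have "\<forall>m\<in>M. p \<in> Aset d h m"
  proof
    fix m assume "m \<in> M"
    then have "Qv d h p (real (Suc m)) = 0" using Qp qM_root[OF M(1)] q_def by simp
    moreover have "p $ h 0 = 0" using pj[of 0] d by simp
    ultimately show "p \<in> Aset d h m" by (simp add: Aset_def)
  qed
  ultimately show ?thesis by blast
qed


lemma L_d: "CARD('n::finite) \<ge> 1"
  by (simp add: Suc_le_eq)

lemma L_h: "\<exists>h. bij_betw h {0..<CARD('n::finite)} (UNIV::'n set)"
  using ex_bij_betw_nat_finite[of "UNIV::'n set"] by simp

lemma L_injA:
  assumes hb: "bij_betw h {0..<d} (UNIV::'n::finite set)" and d: "d \<ge> 1"
  shows "inj (Aset d h)"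
proof (rule injI)
  fix m m' assume eq: "Aset d h m = Aset d h m'"
  have "zv h (real (Suc m)) \<in> Aset d h m" "zv h (real (Suc m')) \<in> Aset d h m'"
    by (simp_all add: zv_mem[OF hb d])
  then have "zv h (real (Suc m)) \<in> Aset d h m'" "zv h (real (Suc m')) \<in> Aset d h m" using eq by simp_all
  then have "real (Suc m) \<le> real (Suc m')" "real (Suc m') \<le> real (Suc m)"
    unfolding zv_mem[OF hb d] by simp_all
  then show "m = m'" by simp
qed

lemma L_injB:
  assumes R: "R \<ge> 0"
  shows "inj (\<lambda>n::nat. cball (0::real^'n::finite) (R + real n))"
proof (rule injI)
  fix a b :: nat assume "cball (0::real^'n) (R + real a) = cball 0 (R + real b)"
  then have "R + real a = R + real b" using R by (simp add: cball_eq_cball_iff)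
  then show "a = b" by simp
qed

lemma L_hA:
  assumes hb: "bij_betw h {0..<d} (UNIV::'n::finite set)" and d: "d \<ge> 1"
    and A': "A' \<subseteq> range (Aset d h)" "finite A'"
  shows "\<Inter>A' \<noteq> {}"
proof -
  obtain M where M: "A' = Aset d h ` M" using A'(1) subset_image_iff[of A' "Aset d h" UNIV] by blast
  have im: "inj_on (Aset d h) M" by (rule inj_on_subset[OF L_injA[OF hb d] subset_UNIV])
  have fM: "finite M" using M A'(2) finite_imageD[OF _ im] by simp
  define c where "c = (\<Sum>m\<in>M. real (Suc m))"
  have mem: "zv h c \<in> X" if X: "X \<in> A'" for X
  proof -
    have "X \<in> Aset d h ` M" using X M by simp
    then obtain m where m: "m \<in> M" "X = Aset d h m" by (rule imageE)
    have "real (Suc m) \<le> c" unfolding c_def using fM m(1) by (intro member_le_sum) auto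
    then have "zv h c \<in> Aset d h m" by (subst zv_mem[OF hb d])
    then show ?thesis unfolding m(2) .
  qed
  show ?thesis
  proof
    assume "\<Inter>A' = {}"
    moreover have "zv h c \<in> \<Inter>A'" using mem by (rule InterI)
    ultimately show False by simp
  qed
qed

lemma L_hAB:
  assumes hb: "bij_betw h {0..<d} (UNIV::'n::finite set)" and d: "d \<ge> 1"
    and A': "A' \<subseteq> range (Aset d h)" "finite A'" "card A' \<le> d - 1"
    and B': "B' \<subseteq> range (\<lambda>n::nat. cball (0::real^'n) (real d * 2 ^ d + real n))"
  shows "\<Inter>(A' \<union> B') \<noteq> {}"
proof -
  obtain M where M: "A' = Aset d h ` M" using A'(1) subset_image_iff[of A' "Aset d h" UNIV] by blast
  have im: "inj_on (Aset d h) M" by (rule inj_on_subset[OF L_injA[OF hb d] subset_UNIV])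
  have fM: "finite M" using M A'(2) finite_imageD[OF _ im] by simp
  have cM: "card M \<le> d - 1" using M A'(3) card_image[OF im] by simp
  obtain p where p: "norm p \<le> real d * 2 ^ d" "\<forall>m\<in>M. p \<in> Aset d h m"
    using poly_point[OF hb d fM cM] by blast
  have mem: "p \<in> X" if X: "X \<in> A' \<union> B'" for X
  proof (cases "X \<in> A'")
    case True
    then have "X \<in> Aset d h ` M" using M by simp
    then obtain m where m: "m \<in> M" "X = Aset d h m" by (rule imageE)
    then show ?thesis using p(2) by simp
  next
    case False
    then have "X \<in> B'" using X by simp
    then obtain n where "X = cball 0 (real d * 2 ^ d + real n)" using B' by blast
    then show ?thesis using p(1) by simp
  qed
  show ?thesis
  proof
    assume "\<Inter>(A' \<union> B') = {}"
    moreover have "p \<in> \<Inter>(A' \<union> B')" using mem by (rule InterI)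
    ultimately show False by simp
  qed
qed

lemma L_pierce:
  assumes hb: "bij_betw h {0..<d} (UNIV::'n::finite set)" and d: "d \<ge> 1"
  shows "piercing_number (range (Aset d h)) = \<infinity>"
proof -
  have emp: "{P. finite P \<and> (\<forall>A\<in>range (Aset d h). A \<inter> P \<noteq> {})} = {}"
  proof (rule ccontr)
    assume "{P. finite P \<and> (\<forall>A\<in>range (Aset d h). A \<inter> P \<noteq> {})} \<noteq> {}"
    then obtain P where P: "finite P" "\<forall>A\<in>range (Aset d h). A \<inter> P \<noteq> {}" by blast
    have ex: "\<forall>x\<in>P. \<exists>N. \<forall>m\<ge>N. x \<notin> Aset d h m" using Aset_escape[OF hb d] by blast
    obtain N where N: "\<forall>x\<in>P. \<forall>m\<ge>N x. x \<notin> Aset d h m" using bchoice[OF ex] by blast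
    define m where "m = (\<Sum>x\<in>P. N x)"
    have "\<forall>x\<in>P. x \<notin> Aset d h m"
    proof
      fix x assume x: "x \<in> P"
      have "N x \<le> m" unfolding m_def using P(1) x by (intro member_le_sum) auto
      then show "x \<notin> Aset d h m" using N x by blast
    qed
    then have "Aset d h m \<inter> P = {}" by blast
    then show False using P(2) by blast
  qed
  show ?thesis unfolding piercing_number_def emp image_empty Inf_empty top_enat_def ..
qed

theorem theorem2p1:
  shows "\<exists>(\<A> :: (real ^ 'n) set set) \<B>.
     infinite \<A> \<and> infinite \<B> \<and>
     (\<forall>X\<in>\<A>. closed X \<and> convex X) \<and>
     (\<forall>X\<in>\<B>. closed X \<and> convex X \<and> bounded X) \<and>
     piercing_number \<A> = \<infinity> \<and>
     (\<forall>k::nat. pq_property (CARD('n) + 2 * k) (CARD('n) + k) (\<A> \<union> \<B>))"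
proof -
  define d where "d = CARD('n)"
  have d: "d \<ge> 1" unfolding d_def by (rule L_d)
  obtain h where hb: "bij_betw h {0..<d} (UNIV::'n set)"
    using L_h unfolding d_def by blast
  have R: "real d * 2 ^ d \<ge> 0" by simp
  show ?thesis
  proof (intro exI conjI)
    show "infinite (range (Aset d h))" by (rule range_inj_infinite[OF L_injA[OF hb d]])
    show "infinite (range (\<lambda>n::nat. cball (0::real^'n) (real d * 2 ^ d + real n)))"
      by (rule range_inj_infinite[OF L_injB[OF R]])
    show "\<forall>X\<in>range (Aset d h). closed X \<and> convex X" by (auto simp: Aset_closed Aset_convex)
    show "\<forall>X\<in>range (\<lambda>n::nat. cball (0::real^'n) (real d * 2 ^ d + real n)). closed X \<and> convex X \<and> bounded X"
      by auto
    show "piercing_number (range (Aset d h)) = \<infinity>" by (rule L_pierce[OF hb d])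
    show "\<forall>k. pq_property (CARD('n) + 2 * k) (CARD('n) + k)
        (range (Aset d h) \<union> range (\<lambda>n::nat. cball (0::real^'n) (real d * 2 ^ d + real n)))"
    proof
      fix k
      show "pq_property (CARD('n) + 2 * k) (CARD('n) + k)
        (range (Aset d h) \<union> range (\<lambda>n::nat. cball (0::real^'n) (real d * 2 ^ d + real n)))"
        unfolding d_def[symmetric]
        by (rule comb_pq[OF range_inj_infinite[OF L_injA[OF hb d]] L_hA[OF hb d] L_hAB[OF hb d] d])
    qed
  qed
qed

end
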